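(* Let $L\ge2$, $k\ge2$ be integers and $\kappa:\{1,\dots,k-1\}\to\{0,\dots,L-1\}$ a map. Let $(a(n))_{n=0}^\infty$ be the $(L,k,\kappa)$-TM sequence built with the map $(s,n)\mapsto\kappa(s)$ (independent of $n$). Then $(a(n))_{n=0}^\infty$ is ultimately periodic if and only if $$s\,\kappa(1)\equiv\kappa(s)\pmod L\ \text{ for all }1\le s\le k-1,\quad\text{and}\quad \kappa(k-1)\equiv0\pmod L.$$ Moreover, if $(a(n))_{n=0}^\infty$ is not ultimately periodic, then none of its equally spaced subsequences $(a(N+tl))_{t=0}^\infty$ ($N\ge0$, $l>0$) is ultimately periodic.
   Context: Let $a_0,\dots,a_{L-1}$ be pairwise distinct complex numbers and $f$ the map on $\{a_0,\dots,a_{L-1}\}$ with $f(a_i)=a_{i+1}$ (indices mod $L$), extended letterwise to finite words; $f^j$ its $j$-fold iterate, $f^0$ the identity. For a map $\kappa':\{1,\dots,k-1\}\times\mathbb{N}\to\{0,\dots,L-1\}$ define $A_0=a_0$, $A_{n+1}=A_n\,f^{\kappa'(1,n)}(A_n)\cdots f^{\kappa'(k-1,n)}(A_n)$ (concatenation); the limit infinite word, indexed from $0$, is the $(L,k,\kappa')$-TM sequence. A sequence $(b(n))$ is ultimately periodic if there are $N\ge0$, $l>0$ with $b(n)=b(n+l)$ for all $n\ge N$. *)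

theory Defs
  imports Complex_Main "HOL-Number_Theory.Cong"
begin

definition tm_f :: "(nat \<Rightarrow> complex) \<Rightarrow> nat \<Rightarrow> complex \<Rightarrow> complex" where
  "tm_f a L z = a (Suc (THE i. i < L \<and> a i = z) mod L)"

fun tm_word :: "(nat \<Rightarrow> complex) \<Rightarrow> nat \<Rightarrow> nat \<Rightarrow> (nat \<Rightarrow> nat \<Rightarrow> nat) \<Rightarrow> nat \<Rightarrow> complex list" where
  "tm_word a L k \<kappa>' 0 = [a 0]"
| "tm_word a L k \<kappa>' (Suc n) =
     tm_word a L k \<kappa>' n @
     concat (map (\<lambda>s. map (tm_f a L ^^ \<kappa>' s n) (tm_word a L k \<kappa>' n)) [1..<k])"

text \<open>The limit infinite word (indexed from 0): since |A_m| = k^m > m for k >= 2 and each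
  A_n is a prefix of A_(n+1), its m-th letter is the m-th letter of A_m.\<close>
definition tm_seq :: "(nat \<Rightarrow> complex) \<Rightarrow> nat \<Rightarrow> nat \<Rightarrow> (nat \<Rightarrow> nat \<Rightarrow> nat) \<Rightarrow> nat \<Rightarrow> complex" where
  "tm_seq a L k \<kappa>' m = tm_word a L k \<kappa>' m ! m"

definition ultimately_periodic :: "(nat \<Rightarrow> 'b) \<Rightarrow> bool" where
  "ultimately_periodic b \<longleftrightarrow> (\<exists>N l. l > 0 \<and> (\<forall>n\<ge>N. b n = b (n + l)))"

end

theory Submission
  imports Defs
begin

definition wt :: "(nat \<Rightarrow> nat) \<Rightarrow> nat \<Rightarrow> nat" where
  "wt \<kappa> s = (if s = 0 then 0 else \<kappa> s)"

function dd :: "nat \<Rightarrow> (nat \<Rightarrow> nat) \<Rightarrow> nat \<Rightarrow> nat" where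
  "dd k \<kappa> n = (if n = 0 \<or> k < 2 then 0 else wt \<kappa> (n mod k) + dd k \<kappa> (n div k))"
  by pat_completeness auto
termination
  by (relation "measure (\<lambda>(k,\<kappa>,n). n)") auto

declare dd.simps[simp del]

lemma dd_eq: "k \<ge> 2 \<Longrightarrow> dd k \<kappa> n = wt \<kappa> (n mod k) + dd k \<kappa> (n div k)"
  by (cases "n = 0") (auto simp: dd.simps[of k \<kappa> n] dd.simps[of k \<kappa> 0] wt_def)

lemma dd_0[simp]: "dd k \<kappa> 0 = 0"
  by (simp add: dd.simps)

lemma dd_split: "k \<ge> 2 \<Longrightarrow> r < k^j \<Longrightarrow> dd k \<kappa> (q*k^j + r) = dd k \<kappa> q + dd k \<kappa> r"
proof (induction j arbitrary: q r)
  case 0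
  then show ?case by simp
next
  case (Suc j)
  have k0: "k > 0" using Suc by simp
  have m: "(q*k^Suc j + r) mod k = r mod k"
    by (metis mod_mult_self3 mult.assoc mult.commute power_Suc)
  have d: "(q*k^Suc j + r) div k = q*k^j + r div k"
  proof -
    have "q*k^Suc j + r = r + k * (q*k^j)" by (simp add: algebra_simps)
    then show ?thesis unfolding \<open>q*k^Suc j + r = r + k * (q*k^j)\<close> using k0 by simp
  qed
  have rd: "r div k < k^j"
    using Suc.prems k0 by (simp add: div_less_iff_less_mult mult.commute)
  have "dd k \<kappa> (q*k^Suc j + r) = wt \<kappa> (r mod k) + dd k \<kappa> (q*k^j + r div k)"
    using dd_eq[OF Suc.prems(1), of \<kappa> "q*k^Suc j + r"] m d by simp
  also have "\<dots> = wt \<kappa> (r mod k) + dd k \<kappa> q + dd k \<kappa> (r div k)"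
    using Suc.IH[OF Suc.prems(1) rd] by simp
  also have "\<dots> = dd k \<kappa> q + dd k \<kappa> r"
    using dd_eq[OF Suc.prems(1), of \<kappa> r] by simp
  finally show ?case .
qed

lemma dd_digit: "k \<ge> 2 \<Longrightarrow> s < k \<Longrightarrow> dd k \<kappa> s = wt \<kappa> s"
  using dd_eq[of k \<kappa> s] by simp

lemma tm_f_a:
  assumes "inj_on a {..<L}" "i < L"
  shows "tm_f a L (a i) = a (Suc i mod L)"
proof -
  have "(THE j. j < L \<and> a j = a i) = i"
    using assms by (intro the_equality) (auto dest: inj_onD)
  then show ?thesis by (simp add: tm_f_def)
qed

lemma tm_f_pow:
  assumes "inj_on a {..<L}" "i < L"
  shows "(tm_f a L ^^ j) (a i) = a ((i + j) mod L)"
proof (induction j)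
  case 0
  then show ?case using assms by simp
next
  case (Suc j)
  have L0: "L > 0" using assms by simp
  have "(tm_f a L ^^ Suc j) (a i) = tm_f a L (a ((i + j) mod L))" using Suc by simp
  also have "\<dots> = a (Suc ((i+j) mod L) mod L)"
    using tm_f_a[OF assms(1)] L0 by simp
  also have "\<dots> = a ((i + Suc j) mod L)" by (simp add: mod_Suc_eq)
  finally show ?case .
qed

lemma concat_nth_eq:
  "\<forall>s\<in>set ss. length (F s) = m \<Longrightarrow> i < length ss \<Longrightarrow> r < m \<Longrightarrow>
    concat (map F ss) ! (i*m + r) = F (ss!i) ! r"
proof (induction ss arbitrary: i)
  case Nil
  then show ?case by simp
next
  case (Cons x ss)
  show ?case
  proof (cases i)
    case 0
    then show ?thesis using Cons by (simp add: nth_append)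
  next
    case (Suc j)
    have "concat (map F (x#ss)) ! (i*m + r) = concat (map F ss) ! (j*m+r)"
      using Cons.prems Suc by (simp add: nth_append)
    then show ?thesis using Cons Suc by simp
  qed
qed

lemma tm_len: "k \<ge> 1 \<Longrightarrow> length (tm_word a L k \<kappa>' n) = k^n"
proof (induction n)
  case 0
  then show ?case by simp
next
  case (Suc n)
  have "length (concat (map (\<lambda>s. map (tm_f a L ^^ \<kappa>' s n) (tm_word a L k \<kappa>' n)) [1..<k]))
        = (k-1) * k^n"
    using Suc by (simp add: length_concat comp_def sum_list_triv)
  then show ?case using Suc by (simp add: algebra_simps)
qed

lemma tm_nth:
  assumes "inj_on a {..<L}" "L > 0" "k \<ge> 2"
  shows "i < k^n \<Longrightarrow> tm_word a L k (\<lambda>s n. \<kappa> s) n ! i = a (dd k \<kappa> i mod L)"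
proof (induction n arbitrary: i)
  case 0
  then show ?case by simp
next
  case (Suc n)
  let ?A = "tm_word a L k (\<lambda>s n. \<kappa> s) n"
  have lenA: "length ?A = k^n" using tm_len assms by simp
  have kn0: "k^n > 0" using assms by simp
  define s where "s = i div k^n"
  define r where "r = i mod k^n"
  have ir: "i = s*k^n + r" by (simp add: s_def r_def div_mult_mod_eq)
  have rl: "r < k^n" using kn0 by (simp add: r_def)
  have sl: "s < k" using Suc.prems kn0 by (simp add: s_def div_less_iff_less_mult)
  show ?case
  proof (cases "s = 0")
    case True
    then have "i < k^n" using ir rl by simp
    then show ?thesis using Suc.IH lenA by (simp add: nth_append)
  next
    case False
    have idx: "i - k^n = (s-1)*k^n + r" using ir False by (simp add: diff_mult_distrib)
    have "tm_word a L k (\<lambda>s n. \<kappa> s) (Suc n) ! i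
        = concat (map (\<lambda>s. map (tm_f a L ^^ \<kappa> s) ?A) [1..<k]) ! (i - k^n)"
    proof -
      have "\<not> i < k^n" using ir False
      proof -
        have "k^n \<le> s*k^n" using False by simp
        then show ?thesis using ir by linarith
      qed
      then show ?thesis using lenA by (simp add: nth_append)
    qed
    also have "\<dots> = map (tm_f a L ^^ \<kappa> s) ?A ! r"
      using concat_nth_eq[of "[1..<k]" "\<lambda>s. map (tm_f a L ^^ \<kappa> s) ?A" "k^n" "s-1" r]
        idx lenA rl sl False by simp
    also have "\<dots> = (tm_f a L ^^ \<kappa> s) (a (dd k \<kappa> r mod L))"
      using Suc.IH rl lenA by simp
    also have "\<dots> = a ((dd k \<kappa> r mod L + \<kappa> s) mod L)"
      using tm_f_pow[OF assms(1)] assms(2) by simp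
    also have "\<dots> = a (dd k \<kappa> i mod L)"
    proof -
      have "dd k \<kappa> i = dd k \<kappa> s + dd k \<kappa> r" using ir dd_split[OF assms(3) rl] by simp
      also have "\<dots> = \<kappa> s + dd k \<kappa> r" using dd_digit[OF assms(3) sl] False by (simp add: wt_def)
      finally show ?thesis by (simp add: mod_add_right_eq add.commute)
    qed
    finally show ?thesis .
  qed
qed

lemma tm_seq_eq:
  assumes "inj_on a {..<L}" "L > 0" "k \<ge> 2"
  shows "tm_seq a L k (\<lambda>s n. \<kappa> s) m = a (dd k \<kappa> m mod L)"
proof -
  have "m < 2^m" by (rule less_exp)
  also have "(2::nat)^m \<le> k^m" using assms by (simp add: power_mono)
  finally show ?thesis unfolding tm_seq_def using tm_nth[OF assms] by simp
qed



lemma P1: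
  assumes k2: "k \<ge> 2" and L0: "L > 0"
    and C1: "\<forall>s\<in>{1..k-1}. [s * \<kappa> 1 = \<kappa> s] (mod L)"
    and C2: "[\<kappa> (k-1) = 0] (mod L)"
  shows "dd k \<kappa> n mod L = (\<kappa> 1 * n) mod L"
proof (induction n rule: less_induct)
  case (less n)
  show ?case
  proof (cases "n = 0")
    case True then show ?thesis by simp
  next
    case False
    have lt: "n div k < n" using False k2 by simp
    have w: "wt \<kappa> (n mod k) mod L = ((n mod k) * \<kappa> 1) mod L"
    proof (cases "n mod k = 0")
      case True then show ?thesis by (simp add: wt_def)
    next
      case False
      have "n mod k < k" using k2 by simp
      then have "n mod k \<in> {1..k-1}" using False by auto
      then show ?thesis using C1 False by (simp add: wt_def cong_def)
    qed
    have z: "(\<kappa> 1 * (k-1)) mod L = 0"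
    proof -
      have "k - 1 \<in> {1..k-1}" using k2 by simp
      then have "((k-1) * \<kappa> 1) mod L = \<kappa> (k-1) mod L" using C1 by (simp add: cong_def)
      then show ?thesis using C2 by (simp add: cong_def mult.commute)
    qed
    obtain t where t: "\<kappa> 1 * (k-1) = L * t" using z by (auto simp: mod_eq_0_iff_dvd elim: dvdE)
    have nk: "n = n mod k + k * (n div k)" by simp
    have kk: "k*(n div k) = (k-1)*(n div k) + n div k" using k2 by (cases k) auto
    have n3: "n = n mod k + (k-1)*(n div k) + n div k" using nk kk by linarith
    have s1: "\<kappa> 1 * n = \<kappa> 1 * (n mod k) + \<kappa> 1 * ((k-1)*(n div k)) + \<kappa> 1 * (n div k)"
      using arg_cong[where f="\<lambda>x. \<kappa> 1 * x", OF n3] unfolding distrib_left .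
    have s2: "\<kappa> 1 * ((k-1)*(n div k)) = (t * (n div k)) * L"
    proof -
      have "\<kappa> 1 * ((k-1)*(n div k)) = (\<kappa> 1 * (k-1))*(n div k)" by (simp only: mult.assoc)
      also have "\<dots> = (L*t)*(n div k)" by (simp only: t)
      also have "\<dots> = (t * (n div k)) * L" by (simp add: ac_simps)
      finally show ?thesis .
    qed
    have e: "\<kappa> 1 * n = (\<kappa> 1 * (n mod k) + \<kappa> 1 * (n div k)) + (t * (n div k)) * L"
      using s1 s2 by linarith
    have "dd k \<kappa> n mod L = (wt \<kappa> (n mod k) + dd k \<kappa> (n div k)) mod L"
      by (simp only: dd_eq[OF k2, of \<kappa> n])
    also have "\<dots> = (wt \<kappa> (n mod k) mod L + dd k \<kappa> (n div k) mod L) mod L"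
      by (rule mod_add_eq[symmetric])
    also have "\<dots> = ((n mod k) * \<kappa> 1 mod L + (\<kappa> 1 * (n div k)) mod L) mod L"
      using w less.IH[OF lt] by simp
    also have "\<dots> = (\<kappa> 1 * (n mod k) + \<kappa> 1 * (n div k)) mod L"
      by (simp add: mod_add_eq mult.commute)
    also have "\<dots> = \<kappa> 1 * n mod L"
      unfolding e by (rule mod_mult_self1[symmetric])
    finally show ?thesis .
  qed
qed

lemma pigeon:
  fixes P k :: nat
  assumes "P > 0" "k \<ge> 2"
  shows "\<exists>i c. c \<ge> 1 \<and> P dvd k^i * (k^c - 1)"
proof -
  let ?f = "\<lambda>i. k^i mod P"
  have "\<not> inj_on ?f {..P}"
  proof
    assume inj: "inj_on ?f {..P}"
    have "card (?f ` {..P}) = P + 1" using card_image[OF inj] by simp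
    moreover have "?f ` {..P} \<subseteq> {..<P}" using assms by auto
    then have "card (?f ` {..P}) \<le> P" using card_mono[OF finite_lessThan] by fastforce
    ultimately show False by simp
  qed
  then obtain i j where ij: "i \<le> P" "j \<le> P" "i \<noteq> j" "k^i mod P = k^j mod P"
    unfolding inj_on_def by auto
  have "\<exists>i j. i < j \<and> k^i mod P = k^j mod P"
    using ij(3,4) by (metis linorder_neqE_nat)
  then obtain i j where ij2: "i < j" "k^i mod P = k^j mod P" by blast
  have le: "k^i \<le> k^j" using ij2 assms by (simp add: power_increasing)
  have "P dvd k^j - k^i" using ij2(2) mod_eq_dvd_iff_nat[OF le, of P] by simp
  moreover have "k^j - k^i = k^i * (k^(j-i) - 1)"
    using ij2 by (simp add: diff_mult_distrib2 power_add[symmetric])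
  ultimately show ?thesis using ij2 by (intro exI[of _ i] exI[of _ "j-i"]) auto
qed

lemma P2:
  assumes k2: "k \<ge> 2" and L0: "L > 0" and l0: "l > 0"
    and up: "ultimately_periodic (\<lambda>t. dd k \<kappa> (N + t*l) mod L)"
  shows "(\<forall>s\<in>{1..k-1}. [s * \<kappa> 1 = \<kappa> s] (mod L)) \<and> [\<kappa> (k-1) = 0] (mod L)"
proof -
  let ?D = "\<lambda>n. dd k \<kappa> n mod L"
  obtain T p where p0: "p > 0" and per: "\<forall>t\<ge>T. ?D (N + t*l) = ?D (N + (t+p)*l)"
    using up unfolding ultimately_periodic_def by blast
  have a: "?D (N + t*l) = ?D (N + (t + m*p)*l)" if "t \<ge> T" for m t
  proof (induction m)
    case 0 then show ?case by simp
  next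
    case (Suc m)
    have "t + m*p \<ge> T" using that by simp
    then have "?D (N + (t + m*p)*l) = ?D (N + (t + m*p + p)*l)" using per by blast
    then show ?case using Suc by (simp add: algebra_simps)
  qed
  define J where "J = N + T*l + l"
  have J: "N + T*l + l < k^J"
  proof -
    have "J < 2^J" by (rule less_exp)
    also have "(2::nat)^J \<le> k^J" using k2 by (simp add: power_mono)
    finally show ?thesis by (simp add: J_def)
  qed
  have b: "?D (x + p*l) = ?D x" for x
  proof -
    define q where "q = x*k^J div l"
    define m0 where "m0 = x*k^J mod l"
    have xq: "x*k^J = q*l + m0" by (simp add: q_def m0_def)
    have m0l: "m0 < l" using l0 by (simp add: m0_def)
    define r where "r = N + T*l + (l - m0)"
    have rl: "r < k^J" using J m0l by (simp add: r_def)
    have e1: "x*k^J + r = N + (q+1+T)*l" using xq m0l by (simp add: r_def algebra_simps)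
    have e2: "N + (q+1+T + k^J*p)*l = (x + p*l)*k^J + r" using e1 by (simp add: algebra_simps)
    have "?D (N + (q+1+T)*l) = ?D (N + (q+1+T + k^J*p)*l)" using a[of "q+1+T" "k^J"] by simp
    then have "?D (x*k^J + r) = ?D ((x + p*l)*k^J + r)" using e1 e2 by simp
    then have "(dd k \<kappa> x + dd k \<kappa> r) mod L = (dd k \<kappa> (x+p*l) + dd k \<kappa> r) mod L"
      using dd_split[OF k2 rl] by simp
    then have "[dd k \<kappa> x + dd k \<kappa> r = dd k \<kappa> (x+p*l) + dd k \<kappa> r] (mod L)"
      by (simp add: cong_def)
    then have "[dd k \<kappa> x = dd k \<kappa> (x+p*l)] (mod L)" by (simp only: cong_add_rcancel_nat)
    then show ?thesis by (simp add: cong_def)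
  qed
  define P where "P = p*l"
  have P0: "P > 0" using p0 l0 by (simp add: P_def)
  have c: "?D (x + m*P) = ?D x" for x m
  proof (induction m)
    case 0 then show ?case by simp
  next
    case (Suc m)
    have "?D (x + m*P + P) = ?D (x + m*P)" using b[of "x + m*P"] unfolding P_def by assumption
    then show ?case using Suc by (simp add: algebra_simps)
  qed
  obtain i c where c1: "c \<ge> 1" and dv: "P dvd k^i * (k^c - 1)" using pigeon[OF P0 k2] by blast
  define R where "R = k^c - 1"
  obtain m where mQ: "k^i * R = P * m" using dv unfolding R_def by blast
  have kc: "k^c \<ge> k" using c1 k2
    using power_increasing[of 1 c k] by simp
  have e: "?D (y + R) = ?D y" for y
  proof -
    have "?D (y*k^i + m*P) = ?D (y*k^i)" by (rule c)
    moreover have "y*k^i + m*P = (y + R)*k^i + 0" using mQ by (simp add: algebra_simps)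
    ultimately have "?D ((y + R)*k^i + 0) = ?D (y*k^i + 0)" by simp
    then show ?thesis using dd_split[OF k2, of 0 i \<kappa>] k2 by simp
  qed
  have f: "?D (k^c + m') = (\<kappa> 1 + dd k \<kappa> m') mod L" if "m' < k^c" for m'
    using dd_split[OF k2 that, of \<kappa> 1] dd_digit[OF k2, of 1 \<kappa>] k2 by (simp add: wt_def)
  have g: "wt \<kappa> s mod L = (\<kappa> 1 + wt \<kappa> (s-1)) mod L" if "1 \<le> s" "s \<le> k-1" for s
  proof -
    have "s + R = k^c + (s-1)" using that kc k2 by (simp add: R_def)
    moreover have "s - 1 < k^c" using that kc by simp
    ultimately have "?D s = (\<kappa> 1 + dd k \<kappa> (s-1)) mod L" using e[of s] f by simp
    moreover have "s < k" "s - 1 < k" using that k2 by auto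
    ultimately show ?thesis using dd_digit[OF k2] by simp
  qed
  have h: "wt \<kappa> s mod L = (s * \<kappa> 1) mod L" if "s \<le> k-1" for s
    using that
  proof (induction s)
    case 0 then show ?case by (simp add: wt_def)
  next
    case (Suc s)
    have "wt \<kappa> (Suc s) mod L = (\<kappa> 1 + wt \<kappa> s mod L) mod L"
      using g[of "Suc s"] Suc.prems by (simp add: mod_add_right_eq)
    also have "\<dots> = (\<kappa> 1 + s * \<kappa> 1) mod L" using Suc by (simp add: mod_add_right_eq)
    finally show ?case by simp
  qed
  have C1: "\<forall>s\<in>{1..k-1}. [s * \<kappa> 1 = \<kappa> s] (mod L)"
  proof
    fix s assume s: "s \<in> {1..k-1}"
    then have "wt \<kappa> s mod L = s * \<kappa> 1 mod L" using h by simp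
    then show "[s * \<kappa> 1 = \<kappa> s] (mod L)" using s by (simp add: cong_def wt_def)
  qed
  have C2: "[\<kappa> (k-1) = 0] (mod L)"
  proof -
    have "k + R = k^c + (k-1)" using kc k2 by (simp add: R_def)
    moreover have "k - 1 < k^c" using kc k2 by simp
    ultimately have "?D k = (\<kappa> 1 + dd k \<kappa> (k-1)) mod L" using e[of k] f by simp
    moreover have "dd k \<kappa> k = \<kappa> 1"
      using dd_split[OF k2, of 0 1 \<kappa> 1] dd_digit[OF k2, of 1 \<kappa>] k2 by (simp add: wt_def)
    moreover have "dd k \<kappa> (k-1) = \<kappa> (k-1)" using dd_digit[OF k2, of "k-1" \<kappa>] k2 by (simp add: wt_def)
    ultimately have "(\<kappa> 1 + 0) mod L = (\<kappa> 1 + \<kappa> (k-1)) mod L" by simp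
    then have "[\<kappa> 1 + 0 = \<kappa> 1 + \<kappa> (k-1)] (mod L)" by (simp add: cong_def)
    then have "[0 = \<kappa> (k-1)] (mod L)" by (simp only: cong_add_lcancel_nat)
    then show ?thesis by (simp add: cong_sym)
  qed
  show ?thesis using C1 C2 by blast
qed


lemma up_transfer:
  assumes inj: "inj_on a {..<L}" and L0: "L > 0" and k2: "k \<ge> 2"
    and up: "ultimately_periodic (\<lambda>t. tm_seq a L k (\<lambda>s n. \<kappa> s) (N + t * l))"
  shows "ultimately_periodic (\<lambda>t. dd k \<kappa> (N + t*l) mod L)"
proof -
  obtain T p where "p > 0" and per: "\<forall>n\<ge>T. tm_seq a L k (\<lambda>s n. \<kappa> s) (N + n * l) =
       tm_seq a L k (\<lambda>s n. \<kappa> s) (N + (n + p) * l)"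
    using up unfolding ultimately_periodic_def by blast
  have "\<forall>n\<ge>T. dd k \<kappa> (N + n*l) mod L = dd k \<kappa> (N + (n+p)*l) mod L"
  proof (intro allI impI)
    fix n assume "n \<ge> T"
    then have "tm_seq a L k (\<lambda>s n. \<kappa> s) (N + n * l) = tm_seq a L k (\<lambda>s n. \<kappa> s) (N + (n + p) * l)"
      using per by blast
    then have "a (dd k \<kappa> (N + n*l) mod L) = a (dd k \<kappa> (N + (n+p)*l) mod L)"
      by (simp only: tm_seq_eq[OF inj L0 k2])
    then show "dd k \<kappa> (N + n*l) mod L = dd k \<kappa> (N + (n+p)*l) mod L"
      by (rule inj_onD[OF inj]) (simp_all add: L0)
  qed
  then show ?thesis unfolding ultimately_periodic_def using \<open>p > 0\<close> by blast
qed

theorem corollary3p1: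
  fixes L k :: nat and \<kappa> :: "nat \<Rightarrow> nat" and a :: "nat \<Rightarrow> complex"
  assumes "L \<ge> 2" and "k \<ge> 2"
    and "inj_on a {..<L}"
    and "\<forall>s\<in>{1..k-1}. \<kappa> s < L"
  shows "(ultimately_periodic (tm_seq a L k (\<lambda>s n. \<kappa> s)) \<longleftrightarrow>
           ((\<forall>s\<in>{1..k-1}. [s * \<kappa> 1 = \<kappa> s] (mod L)) \<and> [\<kappa> (k-1) = 0] (mod L)))
       \<and> (\<not> ultimately_periodic (tm_seq a L k (\<lambda>s n. \<kappa> s)) \<longrightarrow>
           (\<forall>N l. l > 0 \<longrightarrow> \<not> ultimately_periodic (\<lambda>t. tm_seq a L k (\<lambda>s n. \<kappa> s) (N + t * l))))"
proof -
  have L0: "L > 0" and k2: "k \<ge> 2" and inj: "inj_on a {..<L}" using assms by auto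
  let ?S = "tm_seq a L k (\<lambda>s n. \<kappa> s)"
  let ?C = "(\<forall>s\<in>{1..k-1}. [s * \<kappa> 1 = \<kappa> s] (mod L)) \<and> [\<kappa> (k-1) = 0] (mod L)"
  have sub: "?C" if l0: "l > 0" and up: "ultimately_periodic (\<lambda>t. ?S (N + t * l))" for N l
    by (rule P2[OF k2 L0 l0 up_transfer[OF inj L0 k2 up]])
  have bk: "?C \<Longrightarrow> ultimately_periodic ?S"
  proof -
    assume c: "?C"
    have "\<forall>n\<ge>0. ?S n = ?S (n + L)"
    proof (intro allI impI)
      fix n :: nat
      have "dd k \<kappa> n mod L = \<kappa> 1 * n mod L" using P1[OF k2 L0] c by blast
      moreover have "dd k \<kappa> (n + L) mod L = \<kappa> 1 * (n + L) mod L" using P1[OF k2 L0] c by blast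
      moreover have "\<kappa> 1 * (n + L) mod L = \<kappa> 1 * n mod L"
        by (simp add: distrib_left)
      ultimately show "?S n = ?S (n + L)" using tm_seq_eq[OF inj L0 k2] by simp
    qed
    then show ?thesis unfolding ultimately_periodic_def using L0 by blast
  qed
  have iff: "ultimately_periodic ?S \<longleftrightarrow> ?C"
  proof
    assume u: "ultimately_periodic ?S"
    have "(\<lambda>t. ?S (0 + t * 1)) = ?S" by simp
    then have "ultimately_periodic (\<lambda>t. ?S (0 + t * 1))" using u by simp
    then show "?C" using sub[of 1 0] by simp
  next
    assume "?C" then show "ultimately_periodic ?S" by (rule bk)
  qed
  have part2: "\<not> ultimately_periodic ?S \<longrightarrow>
           (\<forall>N l. l > 0 \<longrightarrow> \<not> ultimately_periodic (\<lambda>t. ?S (N + t * l)))"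
  proof (intro impI allI notI)
    fix N l
    assume n: "\<not> ultimately_periodic ?S" and l: "l > 0" and u: "ultimately_periodic (\<lambda>t. ?S (N + t * l))"
    have "?C" by (rule sub[OF l u])
    then show False using iff n by simp
  qed
  show ?thesis by (rule conjI[OF iff part2])
qed

end
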